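(* Let $\mathcal{C}_0\subseteq\mathrm{GF}(q^m)^r$ be a linear code with rank weight enumerator $W^{\mathrm{R}}_{\mathcal{C}_0}(x,y)$, and for $s\ge0$ let $\mathcal{C}_s$ be its $s$-th order $\mathbf{B}$-elementary extension, with rank weight enumerator $W^{\mathrm{R}}_{\mathcal{C}_s}(x,y)$. Then $W^{\mathrm{R}}_{\mathcal{C}_s}(x,y)$ does not depend on $\mathbf{B}$ and $$W^{\mathrm{R}}_{\mathcal{C}_s}(x,y)=W^{\mathrm{R}}_{\mathcal{C}_0}(x,y)*\big[x+(q^m-1)y\big]^{[s]}.$$
   Context: $q$ is a prime power. For $\mathbf{x}\in\mathrm{GF}(q^m)^N$, $\mathrm{rk}(\mathbf{x})$ is the dimension over $\mathrm{GF}(q)$ of the $\mathrm{GF}(q)$-span of its coordinates; the rank weight enumerator of $\mathcal{C}\subseteq\mathrm{GF}(q^m)^N$ is $\sum_{\mathbf{c}\in\mathcal{C}}y^{\mathrm{rk}(\mathbf{c})}x^{N-\mathrm{rk}(\mathbf{c})}$. For $s\ge1$ and an $s\times r$ matrix $\mathbf{B}$ over $\mathrm{GF}(q)$, the $s$-th order $\mathbf{B}$-elementary extension of a linear code $\mathcal{C}_0\subseteq\mathrm{GF}(q^m)^r$ is $\mathcal{C}_s=\{(c_0,\dots,c_{r+s-1})\in\mathrm{GF}(q^m)^{r+s}:(c_0,\dots,c_{r-1})-(c_r,\dots,c_{r+s-1})\mathbf{B}\in\mathcal{C}_0\}$; the $0$-th order extension is $\mathcal{C}_0$ itself. $q$-product: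 for homogeneous polynomials $a(x,y;m)=\sum_{i=0}^{d}a_i(m)y^ix^{d-i}$ and $b(x,y;m)=\sum_{j=0}^{e}b_j(m)y^jx^{e-j}$ of degrees $d,e$, with coefficients real functions of $m$ (zero outside the given ranges), $a*b=\sum_{u=0}^{d+e}c_u(m)y^ux^{d+e-u}$ with $c_u(m)=\sum_{i=0}^uq^{ie}a_i(m)b_{u-i}(m-i)$. $q$-powers: $a^{[0]}=1$, $a^{[l]}=a^{[l-1]}*a$. Here $x+(q^m-1)y$ has coefficients $1$ and $q^m-1$; the coefficients of $W^{\mathrm{R}}_{\mathcal{C}_0}$ are regarded as constants in $m$. *)

theory Defs
  imports Main "HOL.Real"
begin

(* GF(q^m) is modelled as a finite field type 'f; GF(q) as a subfield K of it. *)
definition subfield :: "'f::field set \<Rightarrow> bool" where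
  "subfield K \<longleftrightarrow> 0 \<in> K \<and> 1 \<in> K \<and> (\<forall>a\<in>K. \<forall>b\<in>K. a + b \<in> K \<and> a * b \<in> K)
     \<and> (\<forall>a\<in>K. - a \<in> K \<and> inverse a \<in> K)"

definition K_indep :: "'f::field set \<Rightarrow> 'f set \<Rightarrow> bool" where
  "K_indep K S \<longleftrightarrow> finite S \<and>
     (\<forall>g. (\<forall>v\<in>S. g v \<in> K) \<and> (\<Sum>v\<in>S. g v * v) = 0 \<longrightarrow> (\<forall>v\<in>S. g v = 0))"

definition rk :: "'f::field set \<Rightarrow> 'f list \<Rightarrow> nat" where
  "rk K c = Max {card S | S. S \<subseteq> set c \<and> K_indep K S}"

definition linear_code :: "nat \<Rightarrow> 'f::field list set \<Rightarrow> bool" where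
  "linear_code N C \<longleftrightarrow> C \<subseteq> {c. length c = N} \<and> replicate N 0 \<in> C
     \<and> (\<forall>a\<in>C. \<forall>b\<in>C. map2 (+) a b \<in> C) \<and> (\<forall>t. \<forall>a\<in>C. map (\<lambda>x. t * x) a \<in> C)"

definition K_matrix :: "'f::field set \<Rightarrow> nat \<Rightarrow> nat \<Rightarrow> (nat \<Rightarrow> nat \<Rightarrow> 'f) \<Rightarrow> bool" where
  "K_matrix K s r B \<longleftrightarrow> (\<forall>i<s. \<forall>j<r. B i j \<in> K)"

definition elem_ext :: "'f::field list set \<Rightarrow> nat \<Rightarrow> nat \<Rightarrow> (nat \<Rightarrow> nat \<Rightarrow> 'f) \<Rightarrow> 'f list set" where
  "elem_ext C0 r s B = {c. length c = r + s \<and>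
      map (\<lambda>j. c ! j - (\<Sum>i<s. c ! (r + i) * B i j)) [0..<r] \<in> C0}"

(* rank weight enumerator as a homogeneous polynomial: (degree, coefficients as functions of m) *)
type_synonym hpoly = "nat \<times> (nat \<Rightarrow> int \<Rightarrow> real)"

definition hcoeff :: "hpoly \<Rightarrow> nat \<Rightarrow> int \<Rightarrow> real" where
  "hcoeff P i m = (if i \<le> fst P then snd P i m else 0)"

definition rank_enum :: "'f::field set \<Rightarrow> nat \<Rightarrow> 'f list set \<Rightarrow> hpoly" where
  "rank_enum K N C = (N, \<lambda>i m. real (card {c\<in>C. rk K c = i}))"

definition qprod :: "nat \<Rightarrow> hpoly \<Rightarrow> hpoly \<Rightarrow> hpoly" where
  "qprod q a b = (fst a + fst b, \<lambda>u m.
      (\<Sum>i=0..u. real q ^ (i * fst b) * hcoeff a i m * hcoeff b (u - i) (m - int i)))"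

fun qpow :: "nat \<Rightarrow> hpoly \<Rightarrow> nat \<Rightarrow> hpoly" where
  "qpow q a 0 = (0, \<lambda>i m. if i = 0 then 1 else 0)"
| "qpow q a (Suc l) = qprod q (qpow q a l) a"

(* x + (q^m - 1) y *)
definition lin_poly :: "nat \<Rightarrow> hpoly" where
  "lin_poly q = (1, \<lambda>i m. if i = 0 then 1 else if i = 1 then real q powi m - 1 else 0)"

end

theory Submission
  imports Defs "HOL-Library.FuncSet"
begin


lemma hcoeff_qprod:
  "hcoeff (qprod q a b) u m =
     (\<Sum>i=0..u. real q ^ (i * fst b) * hcoeff a i m * hcoeff b (u - i) (m - int i))"
proof (cases "u \<le> fst a + fst b")
  case True then show ?thesis by (simp add: hcoeff_def qprod_def)
next
  case False
  have "(\<Sum>i=0..u. real q ^ (i * fst b) * hcoeff a i m * hcoeff b (u - i) (m - int i)) = 0"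
    by (rule sum.neutral) (use False in \<open>auto simp: hcoeff_def\<close>)
  then show ?thesis using False by (simp add: hcoeff_def qprod_def)
qed

lemma fst_qprod[simp]: "fst (qprod q a b) = fst a + fst b" by (simp add: qprod_def)

lemma tri2:
  fixes G :: "nat \<Rightarrow> nat \<Rightarrow> real"
  shows "(\<Sum>k\<le>u. \<Sum>i\<le>k. G i (k - i)) = (\<Sum>i\<le>u. \<Sum>j\<le>u - i. G i j)"
proof -
  have "(\<Sum>k\<le>u. \<Sum>i\<le>k. G i (k - i)) = (\<Sum>(i,j)\<in>{(i,j). i+j \<le> u}. G i j)"
    by (rule sum.triangle_reindex_eq[symmetric])
  also have "{(i,j). i+j \<le> u} = Sigma {..u} (\<lambda>i. {..u-i})" by auto
  also have "(\<Sum>(i,j)\<in>Sigma {..u} (\<lambda>i. {..u-i}). G i j) = (\<Sum>i\<le>u. \<Sum>j\<le>u - i. G i j)"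
    by (rule sum.Sigma[symmetric]) auto
  finally show ?thesis .
qed

lemma qprod_assoc:
  "hcoeff (qprod q (qprod q a b) c) u m = hcoeff (qprod q a (qprod q b c)) u m"
proof -
  define A where "A = hcoeff a" define Bc where "Bc = hcoeff b" define C where "C = hcoeff c"
  define e where "e = fst b" define f where "f = fst c"
  have "hcoeff (qprod q (qprod q a b) c) u m =
     (\<Sum>k\<le>u. \<Sum>i\<le>k. real q ^ (k * f) * (real q ^ (i * e) * A i m * Bc (k - i) (m - int i)) * C (u - k) (m - int k))"
    by (simp add: hcoeff_qprod atLeast0AtMost sum_distrib_left sum_distrib_right A_def Bc_def C_def e_def f_def mult.assoc)
  also have "\<dots> = (\<Sum>k\<le>u. \<Sum>i\<le>k. (\<lambda>i j. real q ^ (i * (e + f)) * A i m * (real q ^ (j * f) * Bc j (m - int i) * C (u - i - j) (m - int i - int j))) i (k - i))"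
  proof (intro sum.cong refl)
    fix k i assume "k \<in> {..u}" "i \<in> {..k}"
    then obtain j where kj: "k = i + j" by (metis le_add_diff_inverse atMost_iff)
    show "real q ^ (k * f) * (real q ^ (i * e) * A i m * Bc (k - i) (m - int i)) * C (u - k) (m - int k) =
      (\<lambda>i j. real q ^ (i * (e + f)) * A i m * (real q ^ (j * f) * Bc j (m - int i) * C (u - i - j) (m - int i - int j))) i (k - i)"
      unfolding kj by (simp add: power_add add_mult_distrib distrib_left algebra_simps)
  qed
  also have "\<dots> = (\<Sum>i\<le>u. \<Sum>j\<le>u - i. real q ^ (i * (e + f)) * A i m * (real q ^ (j * f) * Bc j (m - int i) * C (u - i - j) (m - int i - int j)))"
    by (rule tri2)
  also have "\<dots> = hcoeff (qprod q a (qprod q b c)) u m"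
    by (simp add: hcoeff_qprod atLeast0AtMost sum_distrib_left A_def Bc_def C_def e_def f_def mult.assoc)
  finally show ?thesis .
qed

lemma qpow0_base: "hcoeff (qprod q a (qpow q L 0)) u m = hcoeff a u m"
proof -
  have "hcoeff (qprod q a (qpow q L 0)) u m = (\<Sum>i=0..u. if i = u then hcoeff a i m else 0)"
    unfolding hcoeff_qprod by (rule sum.cong) (auto simp: hcoeff_def)
  then show ?thesis by simp
qed

lemma hcoeff_lin: "hcoeff (lin_poly q) j m' = (if j = 0 then 1 else if j = 1 then real q powi m' - 1 else 0)"
  by (simp add: hcoeff_def lin_poly_def)

lemma fst_lin[simp]: "fst (lin_poly q) = 1" by (simp add: lin_poly_def)

lemma lin_step:
  assumes "q \<noteq> 0"
  shows "hcoeff (qprod q P (lin_poly q)) u (int m) = real q ^ u * hcoeff P u (int m)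
     + (if u = 0 then 0 else (real q ^ m - real q ^ (u-1)) * hcoeff P (u-1) (int m))"
proof (cases u)
  case 0 then show ?thesis unfolding hcoeff_qprod by (simp add: hcoeff_def lin_poly_def)
next
  case (Suc v)
  have z: "(\<Sum>i=0..<v. real q ^ (i * fst (lin_poly q)) * hcoeff P i (int m) * hcoeff (lin_poly q) (Suc v - i) (int m - int i)) = 0"
    by (rule sum.neutral) (auto simp: hcoeff_lin)
  have pw: "real q ^ v * (real q powi (int m - int v)) = real q ^ m"
    using assms by (simp add: power_int_diff)
  have "hcoeff (qprod q P (lin_poly q)) u (int m) =
     (\<Sum>i=0..<v. real q ^ (i * fst (lin_poly q)) * hcoeff P i (int m) * hcoeff (lin_poly q) (Suc v - i) (int m - int i))
     + real q ^ v * hcoeff P v (int m) * (real q powi (int m - int v) - 1)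
     + real q ^ Suc v * hcoeff P (Suc v) (int m)"
    unfolding hcoeff_qprod Suc
    by (simp only: sum.atLeast0_atMost_Suc atLeastLessThanSuc_atLeastAtMost[symmetric] sum.atLeast0_lessThan_Suc)
       (simp add: hcoeff_lin)
  also have "\<dots> = real q ^ u * hcoeff P u (int m) + (real q ^ m - real q ^ (u-1)) * hcoeff P (u-1) (int m)"
    unfolding z using pw Suc by (simp add: algebra_simps)
  finally show ?thesis using Suc by simp
qed



definition sp :: "'f::field set \<Rightarrow> 'f set \<Rightarrow> 'f set" where
  "sp K S = {y. \<exists>g. (\<forall>v\<in>S. g v \<in> K) \<and> y = (\<Sum>v\<in>S. g v * v)}"

definition kcl :: "'f::field set \<Rightarrow> 'f set \<Rightarrow> bool" where
  "kcl K W \<longleftrightarrow> 0 \<in> W \<and> (\<forall>x\<in>W. \<forall>y\<in>W. x + y \<in> W) \<and> (\<forall>k\<in>K. \<forall>x\<in>W. k * x \<in> W)"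

lemma sf0: "subfield K \<Longrightarrow> 0 \<in> K" by (simp add: subfield_def)
lemma sf1: "subfield K \<Longrightarrow> 1 \<in> K" by (simp add: subfield_def)
lemma sfadd: "subfield K \<Longrightarrow> a \<in> K \<Longrightarrow> b \<in> K \<Longrightarrow> a + b \<in> K" by (simp add: subfield_def)
lemma sfmul: "subfield K \<Longrightarrow> a \<in> K \<Longrightarrow> b \<in> K \<Longrightarrow> a * b \<in> K" by (simp add: subfield_def)
lemma sfneg: "subfield K \<Longrightarrow> a \<in> K \<Longrightarrow> - a \<in> K" by (simp add: subfield_def)
lemma sfinv: "subfield K \<Longrightarrow> a \<in> K \<Longrightarrow> inverse a \<in> K" by (simp add: subfield_def)
lemma sfdiff: "subfield K \<Longrightarrow> a \<in> K \<Longrightarrow> b \<in> K \<Longrightarrow> a - b \<in> K"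
  by (metis diff_conv_add_uminus sfadd sfneg)

lemma kcl_sum: assumes "kcl K W" "finite A" "\<forall>i\<in>A. f i \<in> W" shows "sum f A \<in> W"
  using assms(2,3)
proof (induction A rule: finite_induct)
  case empty then show ?case using assms(1) by (simp add: kcl_def)
next
  case (insert a A) then show ?case using assms(1) by (simp add: kcl_def)
qed

lemma kcl_add: "kcl K W \<Longrightarrow> x \<in> W \<Longrightarrow> y \<in> W \<Longrightarrow> x + y \<in> W" by (simp add: kcl_def)
lemma kcl_smul: "kcl K W \<Longrightarrow> k \<in> K \<Longrightarrow> x \<in> W \<Longrightarrow> k * x \<in> W" by (simp add: kcl_def)

lemma kcl_diff: assumes "subfield K" "kcl K W" "x \<in> W" "y \<in> W" shows "x - y \<in> W"
proof -
  have "-1 \<in> K" using assms(1) sf1 sfneg by blast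
  then have "(-1) * y \<in> W" using assms kcl_smul by blast
  then have "x + (-1) * y \<in> W" using assms kcl_add by blast
  then show ?thesis by simp
qed

lemma kcl_sp: assumes "subfield K" "finite S" shows "kcl K (sp K S)"
  unfolding kcl_def
proof (intro conjI ballI)
  show "0 \<in> sp K S" unfolding sp_def using sf0[OF assms(1)] by (auto intro!: exI[of _ "\<lambda>_. 0"])
next
  fix x y assume "x \<in> sp K S" "y \<in> sp K S"
  then obtain g h where g: "\<forall>v\<in>S. g v \<in> K" "x = (\<Sum>v\<in>S. g v * v)"
    and h: "\<forall>v\<in>S. h v \<in> K" "y = (\<Sum>v\<in>S. h v * v)" unfolding sp_def by blast
  show "x + y \<in> sp K S" unfolding sp_def
    by (rule CollectI, rule exI[of _ "\<lambda>v. g v + h v"])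
       (use g h sfadd[OF assms(1)] in \<open>auto simp: sum.distrib distrib_right\<close>)
next
  fix k x assume "k \<in> K" "x \<in> sp K S"
  then obtain g where g: "\<forall>v\<in>S. g v \<in> K" "x = (\<Sum>v\<in>S. g v * v)" unfolding sp_def by blast
  show "k * x \<in> sp K S" unfolding sp_def
    by (rule CollectI, rule exI[of _ "\<lambda>v. k * g v"])
       (use g \<open>k \<in> K\<close> sfmul[OF assms(1)] in \<open>auto simp: sum_distrib_left mult.assoc\<close>)
qed

lemma sp_sub: assumes "subfield K" "finite S" shows "S \<subseteq> sp K S"
proof
  fix v assume v: "v \<in> S"
  have "(\<Sum>w\<in>S. (if w = v then 1 else 0) * w) = (\<Sum>w\<in>S. if w = v then w else 0)"
    by (rule sum.cong) auto
  also have "\<dots> = v" using v assms(2) by simp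
  finally have "(\<Sum>w\<in>S. (if w = v then 1 else 0) * w) = v" .
  then show "v \<in> sp K S" unfolding sp_def
    using sf0[OF assms(1)] sf1[OF assms(1)]
    by (auto intro!: exI[of _ "\<lambda>w. if w = v then 1 else 0"])
qed

lemma sp_least: assumes "subfield K" "finite S" "S \<subseteq> W" "kcl K W" shows "sp K S \<subseteq> W"
proof
  fix y assume "y \<in> sp K S"
  then obtain g where g: "\<forall>v\<in>S. g v \<in> K" "y = (\<Sum>v\<in>S. g v * v)" unfolding sp_def by blast
  show "y \<in> W" unfolding g(2)
    by (rule kcl_sum[OF assms(4,2)]) (use g assms(3,4) kcl_smul in blast)
qed

lemma sp_mono: assumes "subfield K" "finite T" "S \<subseteq> T" shows "sp K S \<subseteq> sp K T"
proof -
  have "finite S" using assms finite_subset by blast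
  then show ?thesis using sp_least[of K S "sp K T"] sp_sub[OF assms(1,2)] kcl_sp[OF assms(1,2)] assms by blast
qed

lemma indepD:
  assumes "K_indep K S" "\<forall>v\<in>S. g v \<in> K" "(\<Sum>v\<in>S. g v * v) = 0"
  shows "\<forall>v\<in>S. g v = 0"
  using assms unfolding K_indep_def by blast

lemma indep_insert:
  assumes sf: "subfield K" and ind: "K_indep K S" and v: "v \<notin> sp K S"
  shows "K_indep K (insert v S)"
proof -
  have fS: "finite S" using ind by (simp add: K_indep_def)
  have vS: "v \<notin> S" using sp_sub[OF sf fS] v by blast
  show ?thesis unfolding K_indep_def
  proof (intro conjI allI impI)
    show "finite (insert v S)" using fS by simp
    fix g assume a: "(\<forall>w\<in>insert v S. g w \<in> K) \<and> (\<Sum>w\<in>insert v S. g w * w) = 0"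
    then have e: "g v * v + (\<Sum>w\<in>S. g w * w) = 0" using fS vS by simp
    have gv: "g v = 0"
    proof (rule ccontr)
      assume ne: "g v \<noteq> 0"
      have "(\<Sum>w\<in>S. (- inverse (g v) * g w) * w) = - inverse (g v) * (\<Sum>w\<in>S. g w * w)"
        by (simp add: sum_distrib_left mult.assoc)
      also have "\<dots> = - inverse (g v) * (- (g v * v))"
      proof -
        have "(\<Sum>w\<in>S. g w * w) = - (g v * v)" using e by (simp add: add_eq_0_iff add.commute)
        then show ?thesis by simp
      qed
      also have "\<dots> = (inverse (g v) * g v) * v" by (simp add: mult.assoc)
      also have "\<dots> = v" using ne by simp
      finally have eq: "v = (\<Sum>w\<in>S. (- inverse (g v) * g w) * w)" by simp
      have gK: "g w \<in> K" if "w \<in> insert v S" for w using a that by blast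
      have "\<forall>w\<in>S. - inverse (g v) * g w \<in> K"
        using sfmul[OF sf] sfneg[OF sf] sfinv[OF sf] gK by blast
      then have "v \<in> sp K S" unfolding sp_def mem_Collect_eq
        by (intro exI[of _ "\<lambda>w. - inverse (g v) * g w"] conjI) (use eq in auto)
      then show False using v by blast
    qed
    then have "(\<Sum>w\<in>S. g w * w) = 0" using e by simp
    then have "\<forall>w\<in>S. g w = 0" using indepD[OF ind] a by blast
    then show "\<forall>w\<in>insert v S. g w = 0" using gv by blast
  qed
qed

lemma indep_subset:
  assumes sf: "subfield K" and ind: "K_indep K S" and T: "T \<subseteq> S"
  shows "K_indep K T"
  unfolding K_indep_def
proof (intro conjI allI impI)
  have fS: "finite S" using ind by (simp add: K_indep_def)
  then show fT: "finite T" using T finite_subset by blast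
  fix g assume a: "(\<forall>v\<in>T. g v \<in> K) \<and> (\<Sum>v\<in>T. g v * v) = 0"
  define h where "h = (\<lambda>v. if v \<in> T then g v else 0)"
  have "(\<Sum>v\<in>S. h v * v) = (\<Sum>v\<in>T. g v * v)"
    unfolding h_def by (rule sum.mono_neutral_cong_right) (use fS T in auto)
  then have hs: "(\<Sum>v\<in>S. h v * v) = 0" using a by simp
  have hK: "\<forall>v\<in>S. h v \<in> K" unfolding h_def using a sf0[OF sf] by simp
  have "\<forall>v\<in>S. h v = 0" by (rule indepD[OF ind hK hs])
  then show "\<forall>v\<in>T. g v = 0"
  proof (intro ballI)
    fix v assume "\<forall>v\<in>S. h v = 0" "v \<in> T"
    then have "h v = 0" using T by blast
    then show "g v = 0" using \<open>v \<in> T\<close> h_def by simp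
  qed
qed

lemma card_sp:
  assumes sf: "subfield K" and ind: "K_indep K S"
  shows "card (sp K S) = card K ^ card S"
proof -
  have fS: "finite S" using ind by (simp add: K_indep_def)
  define F where "F = (\<lambda>g. \<Sum>v\<in>S. g v * v)"
  have img: "sp K S = F ` (S \<rightarrow>\<^sub>E K)"
  proof
    show "sp K S \<subseteq> F ` (S \<rightarrow>\<^sub>E K)"
    proof
      fix y assume "y \<in> sp K S"
      then obtain g where g: "\<forall>v\<in>S. g v \<in> K" "y = (\<Sum>v\<in>S. g v * v)" unfolding sp_def by blast
      have "restrict g S \<in> S \<rightarrow>\<^sub>E K" using g by auto
      moreover have "F (restrict g S) = y" unfolding F_def g(2) by (rule sum.cong) auto
      ultimately show "y \<in> F ` (S \<rightarrow>\<^sub>E K)" by blast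
    qed
  next
    show "F ` (S \<rightarrow>\<^sub>E K) \<subseteq> sp K S" unfolding F_def sp_def by (auto simp: PiE_def Pi_def)
  qed
  have inj: "inj_on F (S \<rightarrow>\<^sub>E K)"
  proof (rule inj_onI)
    fix g h assume g: "g \<in> S \<rightarrow>\<^sub>E K" and h: "h \<in> S \<rightarrow>\<^sub>E K" and e: "F g = F h"
    have "(\<Sum>v\<in>S. (g v - h v) * v) = 0" using e unfolding F_def
      by (simp add: left_diff_distrib sum_subtractf)
    moreover have "\<forall>v\<in>S. g v - h v \<in> K" using g h sfdiff[OF sf] by (auto simp: PiE_def Pi_def)
    ultimately have "\<forall>v\<in>S. g v - h v = 0" using indepD[OF ind, of "\<lambda>v. g v - h v"] by blast
    then show "g = h" using g h by (intro PiE_ext) auto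
  qed
  have "card (sp K S) = card (S \<rightarrow>\<^sub>E K)" unfolding img using inj by (rule card_image)
  also have "\<dots> = card K ^ card S" using fS by (simp add: card_PiE)
  finally show ?thesis .
qed



lemma rk_props:
  fixes K :: "'f::field set"
  shows "(\<exists>S0. S0 \<subseteq> set x \<and> K_indep K S0 \<and> card S0 = rk K x)
       \<and> (\<forall>S. S \<subseteq> set x \<and> K_indep K S \<longrightarrow> card S \<le> rk K x)"
proof -
  define I where "I = {card S |S. S \<subseteq> set x \<and> K_indep K S}"
  have fin: "finite I"
    by (rule finite_subset[of _ "{..card (set x)}"]) (auto simp: I_def intro: card_mono)
  have "K_indep K {}" by (simp add: K_indep_def)
  then have ne: "I \<noteq> {}" unfolding I_def by blast
  have r: "rk K x = Max I" by (simp add: rk_def I_def)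
  have "Max I \<in> I" using fin ne by (rule Max_in)
  then have "\<exists>S. Max I = card S \<and> S \<subseteq> set x \<and> K_indep K S" unfolding I_def by (simp only: mem_Collect_eq)
  then obtain S0 where S0: "S0 \<subseteq> set x" "K_indep K S0" "card S0 = Max I" by (elim exE conjE) simp
  have mx: "\<forall>S. S \<subseteq> set x \<and> K_indep K S \<longrightarrow> card S \<le> Max I"
  proof (intro allI impI)
    fix S assume "S \<subseteq> set x \<and> K_indep K S"
    then have "card S \<in> I" unfolding I_def mem_Collect_eq by (intro exI[of _ S]) simp
    then show "card S \<le> Max I" by (rule Max_ge[OF fin])
  qed
  show ?thesis
  proof (intro conjI)
    show "\<exists>S0. S0 \<subseteq> set x \<and> K_indep K S0 \<and> card S0 = rk K x"
      by (intro exI[of _ S0] conjI S0(1) S0(2)) (simp add: S0(3) r)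
    show "\<forall>S. S \<subseteq> set x \<and> K_indep K S \<longrightarrow> card S \<le> rk K x" unfolding r by (rule mx)
  qed
qed

lemma rk_wit:
  fixes K :: "'f::field set"
  obtains S0 where "S0 \<subseteq> set x" "K_indep K S0" "card S0 = rk K x"
  using rk_props[where K=K and x=x] by (elim conjE exE) blast

lemma rk_max:
  fixes K :: "'f::field set"
  shows "S \<subseteq> set x \<Longrightarrow> K_indep K S \<Longrightarrow> card S \<le> rk K x"
  using rk_props[where K=K and x=x] by (elim conjE) simp

lemma card_sp_rk:
  fixes K :: "'f::field set"
  assumes sf: "subfield K"
  shows "card (sp K (set x)) = card K ^ rk K x"
proof -
  obtain S0 where S0: "S0 \<subseteq> set x" "K_indep K S0" "card S0 = rk K x" by (rule rk_wit)
  have mx: "\<forall>S. S \<subseteq> set x \<and> K_indep K S \<longrightarrow> card S \<le> rk K x" using rk_max by blast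
  have fS0: "finite S0" using S0(2) by (simp add: K_indep_def)
  have sub: "set x \<subseteq> sp K S0"
  proof
    fix v assume v: "v \<in> set x"
    show "v \<in> sp K S0"
    proof (rule ccontr)
      assume nv: "v \<notin> sp K S0"
      then have "K_indep K (insert v S0)" using indep_insert[OF sf S0(2)] by blast
      moreover have "v \<notin> S0" using nv sp_sub[OF sf fS0] by blast
      ultimately have "Suc (rk K x) \<le> rk K x" using mx v S0 fS0
        by (metis card_insert_disjoint insert_subset)
      then show False by simp
    qed
  qed
  have "sp K (set x) = sp K S0"
    using sp_least[OF sf _ sub kcl_sp[OF sf fS0]] sp_mono[OF sf _ S0(1)] by auto
  then show ?thesis using card_sp[OF sf S0(2)] S0(3) by simp
qed

lemma two_le_card:
  fixes K :: "'f::{field,finite} set"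
  assumes sf: "subfield K" shows "2 \<le> card K"
proof -
  have "{0,1} \<subseteq> K" using sf0[OF sf] sf1[OF sf] by auto
  then have "card {0::'f,1} \<le> card K" by (rule card_mono[rotated]) simp
  then show ?thesis by simp
qed

lemma rk_eq_sp:
  fixes K :: "'f::{field,finite} set"
  assumes sf: "subfield K" and e: "sp K (set x) = sp K (set y)"
  shows "rk K x = rk K y"
proof -
  have "card K ^ rk K x = card K ^ rk K y" using card_sp_rk[OF sf, where x=x] card_sp_rk[OF sf, where x=y] e by simp
  then show ?thesis using two_le_card[OF sf] by (simp add: power_inject_exp)
qed

lemma sp_eq_of:
  fixes K :: "'f::field set"
  assumes sf: "subfield K" and "set x \<subseteq> sp K (set y)" "set y \<subseteq> sp K (set x)"
  shows "sp K (set x) = sp K (set y)"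
  using sp_least[OF sf _ assms(2) kcl_sp[OF sf]] sp_least[OF sf _ assms(3) kcl_sp[OF sf]] by auto

lemma rk_snoc_in:
  fixes K :: "'f::{field,finite} set"
  assumes sf: "subfield K" and t: "t \<in> sp K (set x)"
  shows "rk K (x @ [t]) = rk K x"
proof (rule rk_eq_sp[OF sf], rule sp_eq_of[OF sf])
  show "set (x @ [t]) \<subseteq> sp K (set x)" using t sp_sub[OF sf, where S="set x"] by auto
  show "set x \<subseteq> sp K (set (x @ [t]))" using sp_sub[OF sf, where S="set (x @ [t])"] by auto
qed

lemma rk_snoc_out:
  fixes K :: "'f::{field,finite} set"
  assumes sf: "subfield K" and t: "t \<notin> sp K (set x)"
  shows "rk K (x @ [t]) = Suc (rk K x)"
proof (rule antisym)
  obtain S0 where S0: "S0 \<subseteq> set x" "K_indep K S0" "card S0 = rk K x" by (rule rk_wit)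
  have fS0: "finite S0" using S0(2) by (simp add: K_indep_def)
  have "t \<notin> sp K S0" using t sp_mono[OF sf _ S0(1)] by auto
  then have i: "K_indep K (insert t S0)" using indep_insert[OF sf S0(2)] by blast
  have "t \<notin> S0" using t S0(1) sp_sub[OF sf, where S="set x"] by auto
  then have "card (insert t S0) = Suc (rk K x)" using fS0 S0(3) by simp
  moreover have "insert t S0 \<subseteq> set (x @ [t])" using S0(1) by auto
  ultimately show "Suc (rk K x) \<le> rk K (x @ [t])" using rk_max[OF _ i, where x="x @ [t]"] by simp
next
  obtain S1 where S1: "S1 \<subseteq> set (x @ [t])" "K_indep K S1" "card S1 = rk K (x @ [t])" by (rule rk_wit)
  have fS1: "finite S1" using S1(2) by (simp add: K_indep_def)
  have "S1 - {t} \<subseteq> set x" using S1(1) by auto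
  moreover have "K_indep K (S1 - {t})" using indep_subset[OF sf S1(2)] by blast
  ultimately have "card (S1 - {t}) \<le> rk K x" by (rule rk_max)
  moreover have "card S1 \<le> Suc (card (S1 - {t}))"
  proof (cases "t \<in> S1")
    case True
    then have "card (S1 - {t}) = card S1 - 1" using fS1 by (simp add: card_Diff_singleton)
    then show ?thesis by linarith
  next
    case False then show ?thesis by simp
  qed
  ultimately show "rk K (x @ [t]) \<le> Suc (rk K x)" using S1(3) by linarith
qed



lemma card_snoc:
  fixes K :: "'f::{field,finite} set"
  assumes sf: "subfield K" and cU: "card (UNIV :: 'f set) = card K ^ m"
  shows "real (card {t. rk K (x @ [t]) = u}) =
     (if u = rk K x then real (card K) ^ rk K x
      else if u = Suc (rk K x) then real (card K) ^ m - real (card K) ^ rk K x else 0)"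
proof -
  have r: "rk K (x @ [t]) = (if t \<in> sp K (set x) then rk K x else Suc (rk K x))" for t
    using rk_snoc_in[OF sf] rk_snoc_out[OF sf] by simp
  have A: "{t. rk K (x @ [t]) = rk K x} = sp K (set x)"
    unfolding r by auto
  have Bq: "{t. rk K (x @ [t]) = Suc (rk K x)} = UNIV - sp K (set x)"
    unfolding r by auto
  have C: "u \<noteq> rk K x \<Longrightarrow> u \<noteq> Suc (rk K x) \<Longrightarrow> {t. rk K (x @ [t]) = u} = {}"
    using rk_snoc_in[OF sf] rk_snoc_out[OF sf] by blast
  have cs: "card (sp K (set x)) = card K ^ rk K x" by (rule card_sp_rk[OF sf])
  have "card (UNIV - sp K (set x)) = card K ^ m - card K ^ rk K x"
    using cs cU by (simp add: card_Diff_subset)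
  moreover have "card K ^ rk K x \<le> card K ^ m"
    using cs cU card_mono[of UNIV "sp K (set x)"] by simp
  ultimately have "real (card (UNIV - sp K (set x))) = real (card K) ^ m - real (card K) ^ rk K x"
    by (simp add: of_nat_diff)
  then show ?thesis
  proof (cases "u = rk K x")
    case True then show ?thesis using A cs by simp
  next
    case F: False
    show ?thesis
    proof (cases "u = Suc (rk K x)")
      case True then show ?thesis using Bq \<open>real (card (UNIV - sp K (set x))) = _\<close> by simp
    next
      case False then show ?thesis using C F by simp
    qed
  qed
qed



definition ES :: "nat \<Rightarrow> nat \<Rightarrow> 'f list set \<Rightarrow> 'f list set" where
  "ES r s C0 = {y. length y = r + s \<and> take r y \<in> C0}"

lemma finite_ES: "finite (ES r s (C0 :: 'f::finite list set))"
  by (rule finite_subset[OF _ finite_lists_length_eq[of UNIV "r + s"]]) (auto simp: ES_def)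

lemma set_sub_sp:
  fixes K :: "'f::field set"
  assumes sf: "subfield K" and len: "length x = length y"
    and tl: "\<forall>n<length x. r \<le> n \<longrightarrow> x ! n = y ! n"
    and hd: "\<forall>j<r. j < length x \<longrightarrow> x ! j - y ! j \<in> sp K (set y)"
  shows "set x \<subseteq> sp K (set y)"
proof
  fix z assume "z \<in> set x"
  then obtain n where n: "n < length x" "z = x ! n" by (auto simp: in_set_conv_nth)
  have yn: "y ! n \<in> sp K (set y)" using n len sp_sub[OF sf, where S="set y"] by auto
  show "z \<in> sp K (set y)"
  proof (cases "n < r")
    case True
    have "y ! n + (x ! n - y ! n) \<in> sp K (set y)"
      using kcl_add[OF kcl_sp[OF sf] yn hd[rule_format, OF True n(1)]] by simp
    then show ?thesis using n by simp
  next
    case False then show ?thesis using tl n yn by auto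
  qed
qed

lemma sumB_in:
  fixes K :: "'f::field set"
  assumes sf: "subfield K" and KB: "K_matrix K s r B" and len: "length y = r + s" and j: "j < r"
  shows "(\<Sum>i<s. y ! (r + i) * B i j) \<in> sp K (set y)"
proof (rule kcl_sum[OF kcl_sp[OF sf]])
  show "\<forall>i\<in>{..<s}. y ! (r + i) * B i j \<in> sp K (set y)"
  proof
    fix i assume "i \<in> {..<s}"
    then have "B i j \<in> K" "y ! (r + i) \<in> sp K (set y)"
      using KB j len sp_sub[OF sf, where S="set y"] by (auto simp: K_matrix_def)
    then show "y ! (r + i) * B i j \<in> sp K (set y)"
      using kcl_smul[OF kcl_sp[OF sf]] by (metis finite_set mult.commute)
  qed
qed auto

lemma ext_card:
  fixes K :: "'f::{field,finite} set"
  assumes sf: "subfield K" and KB: "K_matrix K s r B"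
  shows "card {c \<in> elem_ext C0 r s B. rk K c = u} = card {y \<in> ES r s C0. rk K y = u}"
proof -
  define S where "S = (\<lambda>(c::'f list) j. \<Sum>i<s. c ! (r + i) * B i j)"
  define f where "f = (\<lambda>c. map (\<lambda>j. c ! j - S c j) [0..<r] @ drop r c)"
  define g where "g = (\<lambda>c. map (\<lambda>j. c ! j + S c j) [0..<r] @ drop r c)"
  have lf: "length c = r + s \<Longrightarrow> length (f c) = r + s" for c by (simp add: f_def)
  have lg: "length c = r + s \<Longrightarrow> length (g c) = r + s" for c by (simp add: g_def)
  have fr: "length c = r + s \<Longrightarrow> r \<le> n \<Longrightarrow> f c ! n = c ! n" for c n by (simp add: f_def nth_append)
  have gr: "length c = r + s \<Longrightarrow> r \<le> n \<Longrightarrow> g c ! n = c ! n" for c n by (simp add: g_def nth_append)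
  have fl: "length c = r + s \<Longrightarrow> n < r \<Longrightarrow> f c ! n = c ! n - S c n" for c n by (simp add: f_def nth_append)
  have gl: "length c = r + s \<Longrightarrow> n < r \<Longrightarrow> g c ! n = c ! n + S c n" for c n by (simp add: g_def nth_append)
  have Sf: "length c = r + s \<Longrightarrow> S (f c) = S c" for c
    unfolding S_def by (intro ext sum.cong refl) (simp add: fr)
  have Sg: "length c = r + s \<Longrightarrow> S (g c) = S c" for c
    unfolding S_def by (intro ext sum.cong refl) (simp add: gr)
  have Sin: "length c = r + s \<Longrightarrow> j < r \<Longrightarrow> S c j \<in> sp K (set c)" for c j
    unfolding S_def using sumB_in[OF sf KB] by blast
  have gf: "g (f c) = c" if l: "length c = r + s" for c
  proof (rule nth_equalityI)
    show "length (g (f c)) = length c" using l lf lg by simp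
    fix i assume "i < length (g (f c))"
    show "g (f c) ! i = c ! i"
    proof (cases "i < r")
      case True then show ?thesis using gl[OF lf[OF l] True] fl[OF l True] Sf[OF l] by simp
    next
      case False then show ?thesis using gr[OF lf[OF l]] fr[OF l] by simp
    qed
  qed
  have fg: "f (g c) = c" if l: "length c = r + s" for c
  proof (rule nth_equalityI)
    show "length (f (g c)) = length c" using l lf lg by simp
    fix i assume "i < length (f (g c))"
    show "f (g c) ! i = c ! i"
    proof (cases "i < r")
      case True then show ?thesis using fl[OF lg[OF l] True] gl[OF l True] Sg[OF l] by simp
    next
      case False then show ?thesis using fr[OF lg[OF l]] gr[OF l] by simp
    qed
  qed
  have rkf: "length c = r + s \<Longrightarrow> rk K (f c) = rk K c" for c
  proof -
    assume l: "length c = r + s"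
    have 1: "set (f c) \<subseteq> sp K (set c)"
    proof (rule set_sub_sp[OF sf])
      show "\<forall>j<r. j < length (f c) \<longrightarrow> f c ! j - c ! j \<in> sp K (set c)"
      proof (intro allI impI)
        fix j assume j: "j < r" "j < length (f c)"
        have z: "0 \<in> sp K (set c)" using kcl_sp[OF sf] unfolding kcl_def by blast
        have "0 - S c j \<in> sp K (set c)" by (rule kcl_diff[OF sf kcl_sp[OF sf finite_set] z Sin[OF l j(1)]])
        moreover have "f c ! j - c ! j = 0 - S c j" using fl[OF l j(1)] by simp
        ultimately show "f c ! j - c ! j \<in> sp K (set c)" by simp
      qed
    qed (use l lf fr in auto)
    have 2: "set c \<subseteq> sp K (set (f c))"
    proof (rule set_sub_sp[OF sf])
      show "\<forall>j<r. j < length c \<longrightarrow> c ! j - f c ! j \<in> sp K (set (f c))"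
        using l fl Sin[of "f c"] Sf lf by auto
    qed (use l lf fr in auto)
    show ?thesis using rk_eq_sp[OF sf sp_eq_of[OF sf 1 2]] .
  qed
  have rkg: "length c = r + s \<Longrightarrow> rk K (g c) = rk K c" for c
    using rkf[of "g c"] fg lg by simp
  have bij: "bij_betw f {c \<in> elem_ext C0 r s B. rk K c = u} {y \<in> ES r s C0. rk K y = u}"
  proof (rule bij_betw_byWitness[where f'=g])
    show "\<forall>a\<in>{c \<in> elem_ext C0 r s B. rk K c = u}. g (f a) = a" using gf by (auto simp: elem_ext_def)
    show "\<forall>a\<in>{y \<in> ES r s C0. rk K y = u}. f (g a) = a" using fg by (auto simp: ES_def)
    show "f ` {c \<in> elem_ext C0 r s B. rk K c = u} \<subseteq> {y \<in> ES r s C0. rk K y = u}"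
    proof safe
      fix c assume c: "c \<in> elem_ext C0 r s B"
      then have l: "length c = r + s" by (simp add: elem_ext_def)
      have "take r (f c) = map (\<lambda>j. c ! j - S c j) [0..<r]" by (simp add: f_def)
      then show "f c \<in> ES r s C0" using c l lf by (simp add: ES_def elem_ext_def S_def)
      show "rk K (f c) = rk K c" using rkf l .
    qed
    show "g ` {y \<in> ES r s C0. rk K y = u} \<subseteq> {c \<in> elem_ext C0 r s B. rk K c = u}"
    proof safe
      fix y assume y: "y \<in> ES r s C0"
      then have l: "length y = r + s" by (simp add: ES_def)
      have "map (\<lambda>j. g y ! j - S (g y) j) [0..<r] = take r y"
        by (rule nth_equalityI) (auto simp: l gl Sg)
      then show "g y \<in> elem_ext C0 r s B" using y l lg by (simp add: ES_def elem_ext_def S_def)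
      show "rk K (g y) = rk K y" using rkg l .
    qed
  qed
  then show ?thesis by (rule bij_betw_same_card)
qed



lemma sum_if_const:
  fixes c :: real
  shows "finite A \<Longrightarrow> (\<Sum>x\<in>A. if P x then c else 0) = c * real (card {x\<in>A. P x})"
  by (simp add: sum.inter_filter[symmetric])

lemma rk_le_length:
  fixes K :: "'f::field set"
  shows "rk K x \<le> length x"
proof -
  obtain S0 where S0: "S0 \<subseteq> set x" "K_indep K S0" "card S0 = rk K x" by (rule rk_wit)
  have "card S0 \<le> card (set x)" using S0(1) by (rule card_mono[rotated]) simp
  then show ?thesis using S0(3) card_length[of x] by linarith
qed

lemma rec_step:
  fixes K :: "'f::{field,finite} set" and C0 :: "'f list set"
  assumes sf: "subfield K" and cU: "card (UNIV :: 'f set) = card K ^ m"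
  shows "real (card {y \<in> ES r (Suc s) C0. rk K y = u}) =
     real (card K) ^ u * real (card {y \<in> ES r s C0. rk K y = u})
     + (if u = 0 then 0 else (real (card K) ^ m - real (card K) ^ (u - 1)) * real (card {y \<in> ES r s C0. rk K y = u - 1}))"
proof -
  define T where "T = (\<lambda>x. {t. rk K (x @ [t]) = u})"
  have eq: "{y \<in> ES r (Suc s) C0. rk K y = u} = (\<lambda>(x, t). x @ [t]) ` (SIGMA x:ES r s C0. T x)"
  proof safe
    fix y assume y: "y \<in> ES r (Suc s) C0" "u = rk K y"
    then have l: "length y = Suc (r + s)" by (simp add: ES_def)
    then have ne: "y \<noteq> []" by auto
    have yy: "y = butlast y @ [last y]" using ne by simp
    have "butlast y \<in> ES r s C0" using y l take_butlast[of r y] by (simp add: ES_def)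
    moreover have "last y \<in> T (butlast y)" using y yy unfolding T_def by (metis mem_Collect_eq)
    ultimately show "y \<in> (\<lambda>(x, t). x @ [t]) ` (SIGMA x:ES r s C0. T x)"
      using yy by (auto intro!: image_eqI[of _ _ "(butlast y, last y)"])
  next
    fix x t assume "x \<in> ES r s C0" "t \<in> T x"
    then show "x @ [t] \<in> ES r (Suc s) C0" "rk K (x @ [t]) = u" by (auto simp: ES_def T_def)
  qed
  have inj: "inj_on (\<lambda>(x, t). x @ [t]) (SIGMA x:ES r s C0. T x)"
    by (auto simp: inj_on_def)
  have "card {y \<in> ES r (Suc s) C0. rk K y = u} = card (SIGMA x:ES r s C0. T x)"
    unfolding eq using inj by (rule card_image)
  also have "\<dots> = (\<Sum>x\<in>ES r s C0. card (T x))"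
    by (rule card_SigmaI) (simp_all add: finite_ES)
  finally have "real (card {y \<in> ES r (Suc s) C0. rk K y = u}) = (\<Sum>x\<in>ES r s C0. real (card (T x)))"
    by simp
  also have "\<dots> = (\<Sum>x\<in>ES r s C0. (if rk K x = u then real (card K) ^ u else 0)
       + (if u \<noteq> 0 \<and> rk K x = u - 1 then real (card K) ^ m - real (card K) ^ (u - 1) else 0))"
  proof (rule sum.cong[OF refl])
    fix x
    show "real (card (T x)) = (if rk K x = u then real (card K) ^ u else 0)
       + (if u \<noteq> 0 \<and> rk K x = u - 1 then real (card K) ^ m - real (card K) ^ (u - 1) else 0)"
      unfolding T_def card_snoc[OF sf cU] by auto
  qed
  also have "\<dots> = real (card K) ^ u * real (card {y \<in> ES r s C0. rk K y = u})
     + (real (card K) ^ m - real (card K) ^ (u - 1)) * real (card {y \<in> ES r s C0. u \<noteq> 0 \<and> rk K y = u - 1})"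
    by (simp add: sum.distrib sum_if_const finite_ES)
  finally show ?thesis by (cases "u = 0") simp_all
qed

lemma base_case:
  fixes K :: "'f::{field,finite} set" and C0 :: "'f list set"
  assumes C0: "C0 \<subseteq> {c. length c = r}"
  shows "real (card {y \<in> ES r 0 C0. rk K y = u}) = hcoeff (rank_enum K r C0) u m"
proof -
  have e: "{y \<in> ES r 0 C0. rk K y = u} = {c \<in> C0. rk K c = u}" using C0 by (auto simp: ES_def)
  show ?thesis
  proof (cases "u \<le> r")
    case True then show ?thesis using e by (simp add: hcoeff_def rank_enum_def)
  next
    case False
    have em: "{c \<in> C0. rk K c = u} = {}" using C0 False rk_le_length[of K] by fastforce
    show ?thesis unfolding e em using False by (simp add: hcoeff_def rank_enum_def)
  qed
qed



lemma main_count: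
  fixes K :: "'f::{field,finite} set" and C0 :: "'f list set"
  assumes sf: "subfield K" and cK: "card K = q" and cU: "card (UNIV :: 'f set) = q ^ m"
    and C0: "C0 \<subseteq> {c. length c = r}"
  shows "real (card {y \<in> ES r s C0. rk K y = u})
       = hcoeff (qprod q (rank_enum K r C0) (qpow q (lin_poly q) s)) u (int m)"
proof (induction s arbitrary: u)
  case 0
  show ?case unfolding qpow0_base by (rule base_case[OF C0])
next
  case (Suc s)
  have q0: "q \<noteq> 0" using two_le_card[OF sf] cK by simp
  have cU': "card (UNIV :: 'f set) = card K ^ m" using cU cK by simp
  have "hcoeff (qprod q (rank_enum K r C0) (qpow q (lin_poly q) (Suc s))) u (int m)
      = hcoeff (qprod q (qprod q (rank_enum K r C0) (qpow q (lin_poly q) s)) (lin_poly q)) u (int m)"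
    by (simp add: qprod_assoc)
  also have "\<dots> = real q ^ u * hcoeff (qprod q (rank_enum K r C0) (qpow q (lin_poly q) s)) u (int m)
     + (if u = 0 then 0 else (real q ^ m - real q ^ (u-1)) * hcoeff (qprod q (rank_enum K r C0) (qpow q (lin_poly q) s)) (u-1) (int m))"
    by (rule lin_step[OF q0])
  also have "\<dots> = real (card {y \<in> ES r (Suc s) C0. rk K y = u})"
    unfolding rec_step[OF sf cU'] Suc.IH[symmetric] cK ..
  finally show ?case ..
qed

theorem lemma8:
  fixes K :: "'f::{field,finite} set" and q m r s :: nat and C0 :: "'f list set"
    and B :: "nat \<Rightarrow> nat \<Rightarrow> 'f"
  assumes "subfield K" and "card K = q" and "card (UNIV :: 'f set) = q ^ m"
    and "linear_code r C0" and "K_matrix K s r B"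
  shows "(\<forall>B'. K_matrix K s r B' \<longrightarrow>
            (\<forall>u. card {c\<in>elem_ext C0 r s B'. rk K c = u} = card {c\<in>elem_ext C0 r s B. rk K c = u}))
       \<and> (\<forall>u\<le>r+s. hcoeff (rank_enum K (r+s) (elem_ext C0 r s B)) u (int m)
              = hcoeff (qprod q (rank_enum K r C0) (qpow q (lin_poly q) s)) u (int m))"
proof (intro conjI allI impI)
  have sf: "subfield K" by fact
  have C0: "C0 \<subseteq> {c. length c = r}" using assms(4) by (simp add: linear_code_def)
  fix B' u assume B': "K_matrix K s r B'"
  show "card {c\<in>elem_ext C0 r s B'. rk K c = u} = card {c\<in>elem_ext C0 r s B. rk K c = u}"
    unfolding ext_card[OF sf B', of C0 u] ext_card[OF sf assms(5), of C0 u] ..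

next
  have sf: "subfield K" by fact
  have C0: "C0 \<subseteq> {c. length c = r}" using assms(4) by (simp add: linear_code_def)
  fix u assume u: "u \<le> r + s"
  have "hcoeff (rank_enum K (r+s) (elem_ext C0 r s B)) u (int m)
      = real (card {c\<in>elem_ext C0 r s B. rk K c = u})"
    using u by (simp add: hcoeff_def rank_enum_def)
  also have "\<dots> = real (card {y \<in> ES r s C0. rk K y = u})"
    unfolding ext_card[OF sf assms(5), of C0 u] ..
  also have "\<dots> = hcoeff (qprod q (rank_enum K r C0) (qpow q (lin_poly q) s)) u (int m)"
    by (rule main_count[OF sf assms(2,3) C0])
  finally show "hcoeff (rank_enum K (r+s) (elem_ext C0 r s B)) u (int m)
              = hcoeff (qprod q (rank_enum K r C0) (qpow q (lin_poly q) s)) u (int m)" .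
qed


end
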